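(* Let $A,B,D\subset\mathbb R^n$ and let $\varphi: D\times B\to\mathbb R^n$ satisfy: (a) there is $C_0>0$ such that $\|\varphi(t,x)-\varphi(t,y)\|\le C_0\|x-y\|$ for all $x,y\in B$, $t\in D$; (b) there is $M_0>0$ such that $\|\varphi(t',x)-\varphi(t,x)\|\ge M_0\|t'-t\|$ for all $x\in B$ and $t,t'\in D$. Then the set $\Delta:=\{t\in D:\ \varphi(t,B)\cap A\ne\varnothing\}$ satisfies $\dim_H\Delta\le\min\{\dim_H(A\times B),\dim_H D\}$. Moreover, if $A$ and $B$ are compact and $\varphi$ is continuous, then $\Delta$ is closed in $D$.
   Context: $\dim_H$ denotes Hausdorff dimension; $A\times B\subset\mathbb R^{2n}$ with the Euclidean metric. *)

theory Defs
  imports "HOL-Analysis.Analysis"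
begin

definition hausdorff_pre :: "real \<Rightarrow> real \<Rightarrow> 'a::metric_space set \<Rightarrow> ennreal" where
  "hausdorff_pre s \<delta> E =
     (INF U \<in> {U :: nat \<Rightarrow> 'a set. E \<subseteq> (\<Union>i. U i) \<and> (\<forall>i. bounded (U i) \<and> diameter (U i) \<le> \<delta>)}.
        (\<Sum>i. ennreal (diameter (U i) powr s)))"

definition hausdorff_measure :: "real \<Rightarrow> 'a::metric_space set \<Rightarrow> ennreal" where
  "hausdorff_measure s E = (SUP \<delta> \<in> {0<..}. hausdorff_pre s \<delta> E)"

text \<open>dim_H E = inf of s > 0 with H^s(E) = 0 (infinity if there is none). Since
  H^s(E) = 0 implies H^t(E) = 0 for t > s, this agrees with the usual definition.\<close>

definition hausdorff_dim :: "'a::metric_space set \<Rightarrow> ereal" where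
  "hausdorff_dim E = (INF s \<in> {s::real. s > 0 \<and> hausdorff_measure s E = 0}. ereal s)"

end

theory Submission
  imports Defs
begin


lemma lip_image_diam:
  fixes g :: "'a::metric_space \<Rightarrow> 'b::metric_space"
  assumes L: "L > 0" and X: "bounded X" "X \<subseteq> E"
    and lip: "\<forall>x\<in>E. \<forall>y\<in>E. dist (g x) (g y) \<le> L * dist x y"
  shows "bounded (g ` X) \<and> diameter (g ` X) \<le> L * diameter X"
proof (cases "X = {}")
  case True then show ?thesis by simp
next
  case False
  then obtain x0 where x0: "x0 \<in> X" by blast
  have d: "\<And>x y. x \<in> X \<Longrightarrow> y \<in> X \<Longrightarrow> dist (g x) (g y) \<le> L * diameter X"
  proof -
    fix x y assume "x \<in> X" "y \<in> X"
    then have "dist (g x) (g y) \<le> L * dist x y" using lip X by blast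
    also have "\<dots> \<le> L * diameter X"
      using diameter_bounded_bound[OF X(1) \<open>x\<in>X\<close> \<open>y\<in>X\<close>] L by simp
    finally show "dist (g x) (g y) \<le> L * diameter X" .
  qed
  have b: "bounded (g ` X)"
    unfolding bounded_def using d x0 by blast
  have "(SUP z\<in>(g`X)\<times>(g`X). case z of (u,v) \<Rightarrow> dist u v) \<le> L * diameter X"
    by (rule cSUP_least) (use False d in auto)
  then have "diameter (g ` X) \<le> L * diameter X"
    using False by (simp add: diameter_def[of "g ` X"])
  with b show ?thesis by blast
qed

lemma pre_zero:
  fixes g :: "'a::metric_space \<Rightarrow> 'b::metric_space"
  assumes L: "L > 0" and s: "s > 0" and EE: "E \<subseteq> E'" and F: "F \<subseteq> g ` E"
    and lip: "\<forall>x\<in>E. \<forall>y\<in>E. dist (g x) (g y) \<le> L * dist x y"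
    and z: "hausdorff_pre s (\<delta> / L) E' = 0"
  shows "hausdorff_pre s \<delta> F = 0"
proof -
  have "hausdorff_pre s \<delta> F \<le> 0"
  proof (rule ennreal_le_epsilon)
    fix e :: real assume e: "0 < e"
    define c where "c = L powr s"
    have c: "c > 0" using L by (simp add: c_def)
    have "\<exists>U \<in> {U :: nat \<Rightarrow> 'a set. E' \<subseteq> (\<Union>i. U i) \<and> (\<forall>i. bounded (U i) \<and> diameter (U i) \<le> \<delta> / L)}.
        (\<Sum>i. ennreal (diameter (U i) powr s)) < 0 + ennreal (e / c)"
      by (rule INF_approx_ennreal) (use z e c in \<open>auto simp: hausdorff_pre_def\<close>)
    then obtain U where Ucov: "E' \<subseteq> (\<Union>i. U i)" and Ub: "\<And>i. bounded (U i)"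
       and Ud: "\<And>i. diameter (U i) \<le> \<delta> / L"
       and Us: "(\<Sum>i. ennreal (diameter (U i) powr s)) < ennreal (e / c)" by auto
    define V where "V i = g ` (U i \<inter> E)" for i
    have V: "\<And>i. bounded (V i) \<and> diameter (V i) \<le> L * diameter (U i \<inter> E)"
      unfolding V_def using lip_image_diam[OF L _ _ lip] Ub by (meson bounded_Int inf_le2)
    have VU: "diameter (V i) \<le> L * diameter (U i)" for i
    proof -
      have "diameter (U i \<inter> E) \<le> diameter (U i)"
        using diameter_subset[of "U i \<inter> E" "U i"] Ub[of i] by simp
      then have "L * diameter (U i \<inter> E) \<le> L * diameter (U i)"
        using L by (simp add: mult_left_mono)
      then show ?thesis using V[of i] by linarith
    qed
    have Vcov: "F \<subseteq> (\<Union>i. V i)"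
    proof
      fix y assume "y \<in> F"
      then obtain x where x: "x \<in> E" "y = g x" using F by blast
      then have "x \<in> E'" using EE by blast
      then obtain i where "x \<in> U i" using Ucov by blast
      then have "y \<in> V i" unfolding V_def using x by blast
      then show "y \<in> (\<Union>i. V i)" by blast
    qed
    have Vd: "diameter (V i) \<le> \<delta>" for i
    proof -
      have "L * diameter (U i) \<le> L * (\<delta> / L)"
        by (rule mult_left_mono[OF Ud[of i]]) (use L in simp)
      also have "\<dots> = \<delta>" using L by simp
      finally show ?thesis using VU[of i] by linarith
    qed
    have "hausdorff_pre s \<delta> F \<le> (\<Sum>i. ennreal (diameter (V i) powr s))"
      unfolding hausdorff_pre_def using V Vcov Vd by (intro INF_lower) auto
    also have "\<dots> \<le> (\<Sum>i. ennreal c * ennreal (diameter (U i) powr s))"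
    proof (intro suminf_le)
      fix i
      have g0: "0 \<le> diameter (V i)" using V diameter_ge_0 by blast
      have "diameter (V i) powr s \<le> (L * diameter (U i)) powr s"
        using powr_mono2[of s "diameter (V i)" "L * diameter (U i)"] s g0 VU by simp
      also have "\<dots> = c * diameter (U i) powr s"
        using L diameter_ge_0[OF Ub[of i]] by (simp add: c_def powr_mult)
      finally have "ennreal (diameter (V i) powr s) \<le> ennreal (c * diameter (U i) powr s)"
        by (rule ennreal_leI)
      also have "\<dots> = ennreal c * ennreal (diameter (U i) powr s)"
        using c by (intro ennreal_mult) auto
      finally show "ennreal (diameter (V i) powr s) \<le> ennreal c * ennreal (diameter (U i) powr s)" .
    qed auto
    also have "\<dots> = ennreal c * (\<Sum>i. ennreal (diameter (U i) powr s))" by simp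
    also have "\<dots> \<le> ennreal c * ennreal (e / c)"
      using Us by (intro mult_left_mono) auto
    also have "\<dots> = ennreal (c * (e / c))" using c e by (intro ennreal_mult[symmetric]) auto
    also have "\<dots> = ennreal e" using c by simp
    finally show "hausdorff_pre s \<delta> F \<le> 0 + ennreal e" by simp
  qed
  then show ?thesis by simp
qed


lemma dim_le:
  fixes g :: "'a::metric_space \<Rightarrow> 'b::metric_space"
  assumes L: "L > 0" and EE: "E \<subseteq> E'" and F: "F \<subseteq> g ` E"
    and lip: "\<forall>x\<in>E. \<forall>y\<in>E. dist (g x) (g y) \<le> L * dist x y"
  shows "hausdorff_dim F \<le> hausdorff_dim E'"
  unfolding hausdorff_dim_def
proof (rule INF_superset_mono)
  show "{s. 0 < s \<and> hausdorff_measure s E' = 0} \<subseteq> {s. 0 < s \<and> hausdorff_measure s F = 0}"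
  proof safe
    fix s :: real assume s: "0 < s" and h: "hausdorff_measure s E' = 0"
    have z: "hausdorff_pre s d E' = 0" if "d > 0" for d
    proof -
      have "hausdorff_pre s d E' \<le> hausdorff_measure s E'"
        unfolding hausdorff_measure_def using that by (intro SUP_upper) auto
      then show ?thesis using h by simp
    qed
    have "hausdorff_pre s d F = 0" if "d > 0" for d
      using pre_zero[OF L s EE F lip z] that L by simp
    then show "hausdorff_measure s F = 0"
      unfolding hausdorff_measure_def by simp
  qed
qed simp

theorem corollary2:
  fixes A B D :: "'a::euclidean_space set"
    and \<phi> :: "'a \<Rightarrow> 'a \<Rightarrow> 'a"
  assumes lip: "\<exists>C0>0. \<forall>t\<in>D. \<forall>x\<in>B. \<forall>y\<in>B. norm (\<phi> t x - \<phi> t y) \<le> C0 * norm (x - y)"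
    and sep: "\<exists>M0>0. \<forall>x\<in>B. \<forall>t\<in>D. \<forall>t'\<in>D. norm (\<phi> t' x - \<phi> t x) \<ge> M0 * norm (t' - t)"
  shows "hausdorff_dim {t \<in> D. \<phi> t ` B \<inter> A \<noteq> {}}
           \<le> min (hausdorff_dim (A \<times> B)) (hausdorff_dim D) \<and>
         (compact A \<and> compact B \<and> continuous_on (D \<times> B) (\<lambda>(t, x). \<phi> t x) \<longrightarrow>
           closedin (top_of_set D) {t \<in> D. \<phi> t ` B \<inter> A \<noteq> {}})"
proof -
  obtain C0 where C0: "C0 > 0" "\<forall>t\<in>D. \<forall>x\<in>B. \<forall>y\<in>B. norm (\<phi> t x - \<phi> t y) \<le> C0 * norm (x - y)"
    using lip by blast
  obtain M0 where M0: "M0 > 0" "\<forall>x\<in>B. \<forall>t\<in>D. \<forall>t'\<in>D. norm (\<phi> t' x - \<phi> t x) \<ge> M0 * norm (t' - t)"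
    using sep by blast
  define \<Delta> where "\<Delta> = {t \<in> D. \<phi> t ` B \<inter> A \<noteq> {}}"
  have uniq: "t = t'" if "t \<in> D" "t' \<in> D" "b \<in> B" "\<phi> t b = \<phi> t' b" for t t' b
  proof -
    have "M0 * norm (t' - t) \<le> norm (\<phi> t' b - \<phi> t b)"
      using M0(2) that(1,2,3) by blast
    then have "M0 * norm (t' - t) \<le> 0" using that(4) by simp
    then have "norm (t' - t) \<le> 0" using M0(1) by (simp add: mult_le_0_iff)
    then show ?thesis by simp
  qed
  define S where "S = {p \<in> A \<times> B. \<exists>t\<in>D. \<phi> t (snd p) = fst p}"
  define g where "g p = (SOME t. t \<in> D \<and> \<phi> t (snd p) = fst p)" for p
  have gS: "g p \<in> D \<and> \<phi> (g p) (snd p) = fst p" if "p \<in> S" for p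
  proof -
    from that obtain t where "t \<in> D \<and> \<phi> t (snd p) = fst p" unfolding S_def by blast
    then show ?thesis unfolding g_def by (rule someI)
  qed
  have sub1: "\<Delta> \<subseteq> g ` S"
  proof
    fix t assume "t \<in> \<Delta>"
    then obtain b where b: "t \<in> D" "b \<in> B" "\<phi> t b \<in> A" unfolding \<Delta>_def by blast
    let ?p = "(\<phi> t b, b)"
    have p: "?p \<in> S" using b unfolding S_def by auto
    then have "g ?p = t" using gS[OF p] uniq b by auto
    from this[symmetric] p show "t \<in> g ` S" by (rule image_eqI)
  qed
  define L where "L = (C0 + 1) / M0"
  have L: "L > 0" using C0 M0 by (simp add: L_def)
  have lipg: "\<forall>p\<in>S. \<forall>q\<in>S. dist (g p) (g q) \<le> L * dist p q"
  proof (intro ballI)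
    fix p q assume p: "p \<in> S" and q: "q \<in> S"
    obtain a b where ab: "p = (a, b)" by fastforce
    obtain a' b' where ab': "q = (a', b')" by fastforce
    have bB: "b \<in> B" "b' \<in> B" using p q ab ab' unfolding S_def by auto
    define t where "t = g p"
    define t' where "t' = g q"
    have t: "t \<in> D" "\<phi> t b = a" using gS[OF p] ab t_def by auto
    have t': "t' \<in> D" "\<phi> t' b' = a'" using gS[OF q] ab' t'_def by auto
    have "M0 * norm (t' - t) \<le> norm (\<phi> t' b - \<phi> t b)" using M0(2) bB t t' by blast
    also have "\<dots> \<le> norm (\<phi> t' b - \<phi> t' b') + norm (\<phi> t' b' - \<phi> t b)"
      using norm_triangle_ineq[of "\<phi> t' b - \<phi> t' b'" "\<phi> t' b' - \<phi> t b"] by simp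
    also have "\<dots> \<le> C0 * norm (b - b') + norm (a' - a)"
    proof -
      have "norm (\<phi> t' b - \<phi> t' b') \<le> C0 * norm (b - b')" using C0(2) t'(1) bB by blast
      then show ?thesis using t t' by simp
    qed
    also have "\<dots> \<le> C0 * dist p q + dist p q"
    proof -
      have "norm (b - b') \<le> dist p q" using dist_snd_le[of p q] ab ab' by (simp add: dist_norm)
      moreover have "norm (a' - a) \<le> dist p q" using dist_fst_le[of p q] ab ab'
        by (simp add: dist_norm norm_minus_commute)
      moreover have "C0 * norm (b - b') \<le> C0 * dist p q"
        using calculation(1) C0(1) by (simp add: mult_left_mono)
      ultimately show ?thesis by linarith
    qed
    finally have "M0 * dist t t' \<le> (C0 + 1) * dist p q"
      by (simp add: dist_norm norm_minus_commute algebra_simps)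
    then have "dist t t' \<le> (C0 + 1) * dist p q / M0" using M0(1)
      by (simp add: field_simps)
    then show "dist (g p) (g q) \<le> L * dist p q" unfolding L_def t_def t'_def by simp
  qed
  have d1: "hausdorff_dim \<Delta> \<le> hausdorff_dim (A \<times> B)"
    by (rule dim_le[OF L _ sub1 lipg]) (auto simp: S_def)
  have d2: "hausdorff_dim \<Delta> \<le> hausdorff_dim D"
    by (rule dim_le[of 1 \<Delta> D \<Delta> id]) (auto simp: \<Delta>_def)
  have cl: "closedin (top_of_set D) \<Delta>"
    if cA: "compact A" and cB: "compact B" and cont: "continuous_on (D \<times> B) (\<lambda>(t, x). \<phi> t x)"
  proof -
    have cont': "continuous_on (B \<times> D) (\<lambda>(x, t). \<phi> t x)"
    proof -
      have "continuous_on (B \<times> D) ((\<lambda>(t, x). \<phi> t x) \<circ> prod.swap)"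
        by (rule continuous_on_compose[OF continuous_on_swap]) (use cont in \<open>simp add: product_swap\<close>)
      then show ?thesis by (simp add: comp_def case_prod_beta)
    qed
    have "closedin (top_of_set (B \<times> D)) ((B \<times> D) \<inter> (\<lambda>(x, t). \<phi> t x) -` A)"
      by (rule continuous_closedin_preimage[OF cont' compact_imp_closed[OF cA]])
    from closedin_compact_projection[OF cB this]
    have "closedin (top_of_set D) {y. \<exists>x. x \<in> B \<and> (x, y) \<in> (B \<times> D) \<inter> (\<lambda>(x, t). \<phi> t x) -` A}" .
    moreover have "{y. \<exists>x. x \<in> B \<and> (x, y) \<in> (B \<times> D) \<inter> (\<lambda>(x, t). \<phi> t x) -` A} = \<Delta>"
      unfolding \<Delta>_def by auto
    ultimately show ?thesis by simp
  qed
  show ?thesis using d1 d2 cl unfolding \<Delta>_def by auto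
qed

end
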